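(* Let $x_0\in(0,1)$ and $F(y;x_0)=\frac{e^{(x_0-2)y}-e^{-x_0y}}{2(1-e^{-2y})}$ for $y>0$. Then $F(\cdot;x_0)$ is strictly increasing on $\big(\frac{\ln(2-x_0)-\ln x_0}{2(1-x_0)},\infty\big)$. *)

theory Defs
  imports Complex_Main
begin

definition F :: "real \<Rightarrow> real \<Rightarrow> real" where
  "F x0 y = (exp ((x0 - 2) * y) - exp (- x0 * y)) / (2 * (1 - exp (- 2 * y)))"

end

theory Submission
  imports Defs
begin

lemma h_pos:
  fixes c y :: real
  assumes c: "0 < c" "c < 1" and y: "0 < y"
  shows "c * cosh (c*y) * sinh y < sinh (c*y) * cosh y"
proof -
  let ?h = "\<lambda>t::real. sinh (c*t) * cosh t - c * cosh (c*t) * sinh t"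
  have "?h 0 < ?h y"
  proof (rule DERIV_pos_imp_increasing_open[OF y])
    fix x :: real assume x: "0 < x" "x < y"
    have "(?h has_field_derivative (1 - c^2) * sinh (c*x) * sinh x) (at x)"
      by (auto intro!: derivative_eq_intros simp: algebra_simps power2_eq_square)
    moreover have "(1 - c^2) * sinh (c*x) * sinh x > 0"
    proof -
      have "c^2 < 1" using c by (simp add: power_less_one_iff abs_less_iff)
      thus ?thesis using c x by (simp add: mult_pos_pos)
    qed
    ultimately show "\<exists>d. (?h has_field_derivative d) (at x) \<and> d > 0" by blast
  next
    show "continuous_on {0..y} ?h" by (intro continuous_intros)
  qed
  thus ?thesis by simp
qed

lemma F_eq:
  fixes x0 y :: real
  assumes "0 < y"
  shows "F x0 y = - sinh ((1 - x0) * y) / (2 * sinh y)"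
proof -
  let ?c = "1 - x0"
  have e1: "exp ((x0 - 2) * y) = exp (-y) * exp (-(?c*y))"
    by (simp add: exp_add[symmetric] algebra_simps)
  have e2: "exp (- x0 * y) = exp (-y) * exp (?c*y)"
    by (simp add: exp_add[symmetric] algebra_simps)
  have e3: "exp (-2*y) = exp (-y) * exp (-y)"
    by (simp add: exp_add[symmetric] algebra_simps)
  have e4: "1 = exp (-y) * exp y" by (simp add: exp_minus)
  have num: "exp ((x0 - 2) * y) - exp (- x0 * y) = - 2 * exp (-y) * sinh (?c*y)"
    unfolding e1 e2 sinh_def by (simp add: algebra_simps)
  have den: "2 * (1 - exp (-2*y)) = 4 * exp (-y) * sinh y"
    unfolding sinh_def e3 by (subst e4) (simp add: algebra_simps)
  have "sinh y > 0" using assms by simp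
  then show ?thesis unfolding F_def num den by (simp add: field_simps)
qed

theorem mainTheorem8:
  fixes x0 :: real
  assumes "0 < x0" and "x0 < 1"
  shows "strict_mono_on {(ln (2 - x0) - ln x0) / (2 * (1 - x0)) <..} (F x0)"
proof -
  let ?c = "1 - x0"
  have c: "0 < ?c" "?c < 1" using assms by auto
  have thr: "(ln (2 - x0) - ln x0) / (2 * (1 - x0)) \<ge> 0"
  proof -
    have "ln x0 \<le> ln (2 - x0)" using assms by simp
    thus ?thesis using c by simp
  qed
  have inc: "F x0 a < F x0 b" if ab: "0 < a" "a < b" for a b
  proof -
    let ?G = "\<lambda>t::real. - sinh (?c * t) / (2 * sinh t)"
    have "?G a < ?G b"
    proof (rule DERIV_pos_imp_increasing[OF ab(2)])
      fix x assume x: "a \<le> x" "x \<le> b"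
      hence xp: "0 < x" using ab by simp
      have s: "sinh x > 0" using xp by simp
      have "(?G has_field_derivative
              (sinh (?c*x) * cosh x - ?c * cosh (?c*x) * sinh x) / (2 * (sinh x)^2)) (at x)"
        using s by (auto intro!: derivative_eq_intros simp: field_simps power2_eq_square)
      moreover have "(sinh (?c*x) * cosh x - ?c * cosh (?c*x) * sinh x) / (2 * (sinh x)^2) > 0"
        using h_pos[OF c xp] s by simp
      ultimately show "\<exists>d. (?G has_field_derivative d) (at x) \<and> d > 0" by blast
    qed
    thus ?thesis using ab by (simp add: F_eq)
  qed
  show ?thesis
    unfolding strict_mono_on_def using thr inc by force
qed

end
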